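(* Let $A\in\mathbb{R}^{n\times n}$ be symmetric positive definite, $b\in\mathbb{R}^n$, and let the $CD$ method (described in the context) be applied to $Ay=b$ with starting point $y_0\in\mathbb{R}^n$ and real parameters $\gamma_k\neq 0$ for all $k\ge 0$. Then any directions $p_0,\dots,p_k$ ($k\ge0$) generated by the method are linearly independent. Moreover, within at most $n$ iterations the method computes the solution of $Ay=b$, i.e. $Ay_h=b$ for some $h\le n$.
   Context: The $CD$ method for solving $Ay=b$, with $A$ symmetric positive definite, starting point $y_0\in\mathbb{R}^n$ and nonzero real parameters $\gamma_0,\gamma_1,\dots$, is the following iteration (all norms Euclidean). Set $r_0=b-Ay_0$; if $r_0=0$ stop; set $p_0=r_0$. For $k=0,1,2,\dots$: compute $a_k=\dfrac{r_k^Tp_k}{p_k^TAp_k}$, $y_{k+1}=y_k+a_kp_k$, $r_{k+1}=r_k-a_kAp_k$; if $r_{k+1}=0$ stop; otherwise set $\sigma_k=\gamma_k\dfrac{\|Ap_k\|^2}{p_k^TAp_k}$ and, if $k=0$, $p_1=\gamma_0Ap_0-\sigma_0p_0$, while if $k\ge1$, $\omega_k=\gamma_k\dfrac{(Ap_k)^T(Ap_{k-1})}{p_{k-1}^TAp_{k-1}}$ and $p_{k+1}=\gamma_kAp_k-\sigma_kp_k-\omega_kp_{k-1}$. *)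

theory Defs
  imports "HOL-Analysis.Analysis"
begin

text \<open>State of the CD method after k steps: (y_k, r_k, p_k, p_{k-1}).
  The stopping tests (r = 0) are not built into the recursion; they appear
  as hypotheses/side conditions in the theorem.  For k = 0 the previous
  direction component is a dummy 0 and is not used.\<close>

primrec cd_iter ::
  "real^'n^'n \<Rightarrow> real^'n \<Rightarrow> real^'n \<Rightarrow> (nat \<Rightarrow> real) \<Rightarrow> nat
     \<Rightarrow> (real^'n) \<times> (real^'n) \<times> (real^'n) \<times> (real^'n)" where
  "cd_iter A b y0 g 0 = (y0, b - A *v y0, b - A *v y0, 0)"
| "cd_iter A b y0 g (Suc k) =
     (let (y, r, p, q) = cd_iter A b y0 g k;
          Ap = A *v p;
          a = (r \<bullet> p) / (p \<bullet> Ap);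
          \<sigma> = g k * (norm Ap)^2 / (p \<bullet> Ap);
          \<omega> = (if k = 0 then 0 else g k * (Ap \<bullet> (A *v q)) / (q \<bullet> (A *v q)))
      in (y + a *\<^sub>R p, r - a *\<^sub>R Ap,
          (if k = 0 then g k *\<^sub>R Ap - \<sigma> *\<^sub>R p
           else g k *\<^sub>R Ap - \<sigma> *\<^sub>R p - \<omega> *\<^sub>R q), p))"

definition cd_y where "cd_y A b y0 g k = fst (cd_iter A b y0 g k)"
definition cd_r where "cd_r A b y0 g k = fst (snd (cd_iter A b y0 g k))"
definition cd_p where "cd_p A b y0 g k = fst (snd (snd (cd_iter A b y0 g k)))"

end

theory Submission
  imports Defs
begin

locale cdm =
  fixes A :: "real^'n^'n" and b y0 :: "real^'n" and g :: "nat \<Rightarrow> real"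
  assumes symm: "transpose A = A"
    and posdef: "\<And>x. x \<noteq> 0 \<Longrightarrow> x \<bullet> (A *v x) > 0"
    and gamma: "\<And>k. g k \<noteq> 0"
begin

abbreviation "p \<equiv> cd_p A b y0 g"
abbreviation "r \<equiv> cd_r A b y0 g"
abbreviation "y \<equiv> cd_y A b y0 g"

lemma q_Suc: "snd (snd (snd (cd_iter A b y0 g (Suc k)))) = p k"
  by (simp add: cd_p_def Let_def split: prod.splits)

lemma y_Suc: "y (Suc k) = y k + ((r k \<bullet> p k) / (p k \<bullet> (A *v p k))) *\<^sub>R p k"
  by (simp add: cd_p_def cd_r_def cd_y_def Let_def split: prod.splits)

lemma r_Suc: "r (Suc k) = r k - ((r k \<bullet> p k) / (p k \<bullet> (A *v p k))) *\<^sub>R (A *v p k)"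
  by (simp add: cd_p_def cd_r_def cd_y_def Let_def split: prod.splits)

lemma p_Suc0: "p (Suc 0) = g 0 *\<^sub>R (A *v p 0) - (g 0 * (norm (A *v p 0))^2 / (p 0 \<bullet> (A *v p 0))) *\<^sub>R p 0"
  by (simp add: cd_p_def cd_r_def cd_y_def Let_def split: prod.splits)

lemma p_SucSuc: "p (Suc (Suc k)) = g (Suc k) *\<^sub>R (A *v p (Suc k))
   - (g (Suc k) * (norm (A *v p (Suc k)))^2 / (p (Suc k) \<bullet> (A *v p (Suc k)))) *\<^sub>R p (Suc k)
   - (g (Suc k) * ((A *v p (Suc k)) \<bullet> (A *v p k)) / (p k \<bullet> (A *v p k))) *\<^sub>R p k"
  using q_Suc[of k] by (simp add: cd_p_def cd_r_def cd_y_def Let_def split: prod.splits)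

lemma p0: "p 0 = r 0" and r0: "r 0 = b - A *v y0"
  by (simp_all add: cd_p_def cd_r_def)

lemma res: "r k = b - A *v y k"
proof (induction k)
  case 0 then show ?case by (simp add: r0 cd_y_def)
next
  case (Suc k) then show ?case
    by (simp only: r_Suc y_Suc matrix_vector_right_distrib matrix_vector_mult_scaleR) simp
qed

lemma symA: "x \<bullet> (A *v z) = (A *v x) \<bullet> z"
  by (metis dot_lmul_matrix symm vector_transpose_matrix)

lemma Bsym: "x \<bullet> (A *v z) = z \<bullet> (A *v x)"
  by (metis symA inner_commute)

lemma Bpos: "x \<noteq> 0 \<Longrightarrow> x \<bullet> (A *v x) \<noteq> 0"
  using posdef by force

lemma Ap_expand: "\<exists>s w. g i *\<^sub>R (A *v p i) = p (Suc i) + s *\<^sub>R p i + w *\<^sub>R p (i - 1)"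
proof (cases i)
  case 0
  show ?thesis using p_Suc0 0 by (intro exI[of _ "g 0 * (norm (A *v p 0))^2 / (p 0 \<bullet> (A *v p 0))"] exI[of _ 0]) simp
next
  case (Suc m)
  show ?thesis using p_SucSuc[of m] Suc
    by (intro exI[of _ "g (Suc m) * (norm (A *v p (Suc m)))^2 / (p (Suc m) \<bullet> (A *v p (Suc m)))"]
       exI[of _ "g (Suc m) * ((A *v p (Suc m)) \<bullet> (A *v p m)) / (p m \<bullet> (A *v p m))"]) simp
qed

lemma conj: "(\<forall>i<k. p i \<noteq> 0) \<Longrightarrow> \<forall>i j. i < j \<longrightarrow> j \<le> k \<longrightarrow> p i \<bullet> (A *v p j) = 0"
proof (induction k)
  case 0 then show ?case by auto
next
  case (Suc k)
  then have IH: "\<And>i j. i < j \<Longrightarrow> j \<le> k \<Longrightarrow> p i \<bullet> (A *v p j) = 0" by auto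
  have nz: "\<And>i. i \<le> k \<Longrightarrow> p i \<bullet> (A *v p i) \<noteq> 0" using Suc.prems Bpos by auto
  have new: "p i \<bullet> (A *v p (Suc k)) = 0" if ilt: "i < Suc k" for i
  proof (cases k)
    case 0
    then have i0: "i = 0" using ilt by simp
    have "p 0 \<bullet> (A *v p (Suc 0)) = g 0 * ((A *v p 0) \<bullet> (A *v p 0))
        - (g 0 * (norm (A *v p 0))^2 / (p 0 \<bullet> (A *v p 0))) * (p 0 \<bullet> (A *v p 0))"
      by (simp add: p_Suc0 matrix_vector_mult_diff_distrib matrix_vector_mult_scaleR inner_diff_right symA)
    also have "\<dots> = 0" using nz[of 0] by (simp add: power2_norm_eq_inner)
    finally show ?thesis using 0 i0 by simp
  next
    case (Suc m)
    let ?p1 = "p (Suc m)" and ?p0 = "p m"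
    have e: "p i \<bullet> (A *v p (Suc (Suc m))) = g (Suc m) * ((A *v p i) \<bullet> (A *v ?p1))
      - (g (Suc m) * (norm (A *v ?p1))^2 / (?p1 \<bullet> (A *v ?p1))) * (p i \<bullet> (A *v ?p1))
      - (g (Suc m) * ((A *v ?p1) \<bullet> (A *v ?p0)) / (?p0 \<bullet> (A *v ?p0))) * (p i \<bullet> (A *v ?p0))"
      by (simp add: p_SucSuc matrix_vector_mult_diff_distrib matrix_vector_mult_scaleR inner_diff_right symA)
    consider "i = Suc m" | "i = m" | "i < m" using ilt Suc by linarith
    then show ?thesis
    proof cases
      case 1
      have "?p1 \<bullet> (A *v ?p0) = 0" using IH[of m "Suc m"] Suc Bsym by simp
      then show ?thesis using e 1 nz[of "Suc m"] Suc by (simp add: power2_norm_eq_inner symA)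
    next
      case 2
      have "?p0 \<bullet> (A *v ?p1) = 0" using IH[of m "Suc m"] Suc by simp
      then show ?thesis using e 2 nz[of m] Suc by (simp add: inner_commute)
    next
      case 3
      have a: "p i \<bullet> (A *v ?p1) = 0" "p i \<bullet> (A *v ?p0) = 0" using IH Suc 3 by auto
      obtain s w where sw: "g i *\<^sub>R (A *v p i) = p (Suc i) + s *\<^sub>R p i + w *\<^sub>R p (i - 1)"
        using Ap_expand by blast
      have "g i * ((A *v p i) \<bullet> (A *v ?p1)) = (g i *\<^sub>R (A *v p i)) \<bullet> (A *v ?p1)" by simp
      also have "\<dots> = p (Suc i) \<bullet> (A *v ?p1) + s * (p i \<bullet> (A *v ?p1)) + w * (p (i - 1) \<bullet> (A *v ?p1))"
        by (simp only: sw inner_add_left inner_scaleR_left)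
      also have "\<dots> = 0" using IH[of "Suc i" "Suc m"] IH[of i "Suc m"] IH[of "i - 1" "Suc m"] 3 Suc by auto
      finally have "(A *v p i) \<bullet> (A *v ?p1) = 0" using gamma[of i] by simp
      then show ?thesis using e a Suc by simp
    qed
  qed
  show ?case using IH new by (metis le_Suc_eq)
qed

lemma orth: "(\<forall>i<k. p i \<noteq> 0) \<Longrightarrow> \<forall>i<k. r k \<bullet> p i = 0"
proof (induction k)
  case 0 then show ?case by simp
next
  case (Suc k)
  have cj: "\<And>i. i < k \<Longrightarrow> p i \<bullet> (A *v p k) = 0" using conj[OF Suc.prems] by auto
  have nz: "p k \<bullet> (A *v p k) \<noteq> 0" using Suc.prems Bpos by auto
  have IH: "\<And>i. i < k \<Longrightarrow> r k \<bullet> p i = 0" using Suc by auto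
  have "r (Suc k) \<bullet> p i = 0" if "i < Suc k" for i
  proof -
    have e: "r (Suc k) \<bullet> p i = r k \<bullet> p i - ((r k \<bullet> p k) / (p k \<bullet> (A *v p k))) * (p i \<bullet> (A *v p k))"
      by (simp add: r_Suc inner_diff_left inner_commute[of "A *v p k" "p i"])
    show ?thesis
    proof (cases "i = k")
      case True then show ?thesis using e nz by (simp add: inner_commute)
    next
      case False then have "i < k" using that by simp
      then show ?thesis using e IH cj by simp
    qed
  qed
  then show ?case by blast
qed

lemma nonzero: "(\<forall>j\<le>k. r j \<noteq> 0) \<Longrightarrow> \<forall>i\<le>k. p i \<noteq> 0"
proof (induction k)
  case 0 then show ?case using p0 by simp
next
  case (Suc k)
  then have IH: "\<And>i. i \<le> k \<Longrightarrow> p i \<noteq> 0" by auto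
  have "p (Suc k) \<noteq> 0"
  proof
    assume pz: "p (Suc k) = 0"
    define V where "V = span (p ` {..k})"
    have pV: "\<And>i. i \<le> k \<Longrightarrow> p i \<in> V" unfolding V_def by (simp add: span_base)
    have ApV: "A *v p i \<in> V" if "i \<le> k" for i
    proof -
      obtain s w where sw: "g i *\<^sub>R (A *v p i) = p (Suc i) + s *\<^sub>R p i + w *\<^sub>R p (i - 1)"
        using Ap_expand by blast
      have "p (Suc i) \<in> V"
      proof (cases "i = k")
        case True then show ?thesis using pz by (simp add: V_def span_zero)
      next
        case False then show ?thesis using pV that by simp
      qed
      then have "g i *\<^sub>R (A *v p i) \<in> V" unfolding sw
        using pV that by (simp add: V_def span_add span_scale)
      then have "(1 / g i) *\<^sub>R (g i *\<^sub>R (A *v p i)) \<in> V" unfolding V_def by (rule span_scale)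
      then show ?thesis using gamma[of i] by simp
    qed
    have rV: "m \<le> Suc k \<Longrightarrow> r m \<in> V" for m
    proof (induction m)
      case 0 then show ?case using pV[of 0] p0 by simp
    next
      case (Suc m)
      then have "r m \<in> V" "A *v p m \<in> V" using ApV by auto
      then show ?case by (simp add: r_Suc V_def span_diff span_scale)
    qed
    have o: "\<And>i. i < Suc k \<Longrightarrow> r (Suc k) \<bullet> p i = 0" using orth[of "Suc k"] IH by auto
    have "orthogonal (r (Suc k)) (r (Suc k))"
      apply (rule orthogonal_to_span[of _ "p ` {..k}"])
      using rV[of "Suc k"] apply (simp add: V_def)
      using o by (auto simp: orthogonal_def)
    then show False using Suc.prems by (simp add: orthogonal_def)
  qed
  then show ?case using IH le_Suc_eq by auto
qed

lemma indep: assumes "\<forall>j\<le>k. r j \<noteq> 0" "(\<Sum>j\<le>k. c j *\<^sub>R p j) = 0"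
  shows "\<forall>j\<le>k. c j = 0"
proof (intro allI impI)
  fix i assume i: "i \<le> k"
  have nz: "\<forall>i\<le>k. p i \<noteq> 0" using nonzero assms(1) by blast
  then have cj: "\<And>i j. i < j \<Longrightarrow> j \<le> k \<Longrightarrow> p i \<bullet> (A *v p j) = 0" using conj[of k] by auto
  have "0 = (\<Sum>j\<le>k. c j *\<^sub>R p j) \<bullet> (A *v p i)" using assms(2) by simp
  also have "\<dots> = (\<Sum>j\<le>k. c j * (p j \<bullet> (A *v p i)))" by (simp add: inner_sum_left)
  also have "\<dots> = c i * (p i \<bullet> (A *v p i))"
  proof (rule sum.remove[THEN trans])
    show "finite {..k}" by simp
    show "i \<in> {..k}" using i by simp
    have "\<And>j. j \<in> {..k} - {i} \<Longrightarrow> c j * (p j \<bullet> (A *v p i)) = 0"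
    proof -
      fix j assume j: "j \<in> {..k} - {i}"
      then have "j < i \<or> i < j" "j \<le> k" by auto
      then have "p j \<bullet> (A *v p i) = 0" using cj i Bsym by metis
      then show "c j * (p j \<bullet> (A *v p i)) = 0" by simp
    qed
    then have "(\<Sum>j\<in>{..k} - {i}. c j * (p j \<bullet> (A *v p i))) = 0" by (rule sum.neutral[rule_format])
    then show "c i * (p i \<bullet> (A *v p i)) + (\<Sum>j\<in>{..k} - {i}. c j * (p j \<bullet> (A *v p i))) = c i * (p i \<bullet> (A *v p i))"
      by simp
  qed
  finally show "c i = 0" using Bpos nz i by simp
qed

lemma finish: "\<exists>h\<le>CARD('n). A *v y h = b"
proof (rule ccontr)
  let ?n = "CARD('n)"
  assume "\<not> ?thesis"
  then have rnz: "\<forall>j\<le>?n. r j \<noteq> 0" using res by auto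
  have nz: "\<forall>i\<le>?n. p i \<noteq> 0" using nonzero rnz by blast
  have cj: "\<And>i j. i < j \<Longrightarrow> j \<le> ?n \<Longrightarrow> p i \<bullet> (A *v p j) = 0" using conj[of ?n] nz by auto
  have inj: "inj_on p {..?n}"
  proof (rule inj_onI)
    fix i j assume ij: "i \<in> {..?n}" "j \<in> {..?n}" "p i = p j"
    show "i = j"
    proof (rule ccontr)
      assume "i \<noteq> j"
      then have "i < j \<or> j < i" by auto
      then have "p i \<bullet> (A *v p j) = 0 \<or> p j \<bullet> (A *v p i) = 0" using cj ij(1,2) by auto
      then have "p i \<bullet> (A *v p i) = 0" using ij(3) by auto
      then show False using Bpos nz ij by auto
    qed
  qed
  let ?S = "p ` {..?n}"
  have "independent ?S"
  proof
    assume "dependent ?S"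
    then obtain u where u: "\<exists>v\<in>?S. u v \<noteq> 0" "(\<Sum>v\<in>?S. u v *\<^sub>R v) = 0"
      using dependent_finite[of ?S] by blast
    have "(\<Sum>j\<le>?n. u (p j) *\<^sub>R p j) = 0" using u(2) sum.reindex[OF inj, of "\<lambda>v. u v *\<^sub>R v"] by (simp only: comp_def)
    then have "\<forall>j\<le>?n. u (p j) = 0" using indep[OF rnz, of "\<lambda>j. u (p j)"] by blast
    then show False using u(1) by auto
  qed
  then have "card ?S \<le> DIM(real^'n)" using independent_bound by blast
  moreover have "card ?S = Suc ?n" using card_image[OF inj] by simp
  ultimately show False by simp
qed

end

theorem lemma3:
  fixes A :: "real^'n^'n" and b y0 :: "real^'n" and \<gamma> :: "nat \<Rightarrow> real"
  assumes symm: "transpose A = A"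
    and posdef: "\<And>x. x \<noteq> 0 \<Longrightarrow> x \<bullet> (A *v x) > 0"
    and gamma: "\<And>k. \<gamma> k \<noteq> 0"
  shows "(\<forall>k. (\<forall>j\<le>k. cd_r A b y0 \<gamma> j \<noteq> 0) \<longrightarrow>
            (\<forall>c :: nat \<Rightarrow> real. (\<Sum>j\<le>k. c j *\<^sub>R cd_p A b y0 \<gamma> j) = 0 \<longrightarrow> (\<forall>j\<le>k. c j = 0)))
         \<and> (\<exists>h\<le>CARD('n). A *v cd_y A b y0 \<gamma> h = b)"
proof -
  interpret cdm A b y0 \<gamma> using assms by unfold_locales auto
  show ?thesis using indep finish by auto
qed

end
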